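(* Let $\Omega$ be a finite set, $K\ge1$, let $q$ be a probability distribution on $\Omega$ and let $p(x_1,\ldots,x_K)$ be a probability distribution on $\Omega^K$. Let $(X_1,\ldots,X_K)\sim p$ and $\mathcal{S}=\{X_1,\ldots,X_K\}$. Let $P^\star(\mathrm{acc})$ denote the supremum of $\Pr(Z\in\mathcal{S})$ over all valid token-level selection rules with output $Z$. Then $$P^\star(\mathrm{acc})=\max_{\{\beta_y(x_{1:K})\}}\ \sum_{y\in\Omega}\min\Big(q(y),\ \sum_{x_1,\ldots,x_K\in\Omega}\beta_y(x_{1:K})\,p(x_{1:K})\Big),$$ where the maximum is over all families $\beta_y(x_{1:K})$, $y\in\Omega$, $x_{1:K}\in\Omega^K$, with $0\le\beta_y(x_{1:K})\le1$, $\sum_{y\in\Omega}\beta_y(x_{1:K})=1$ for every $x_{1:K}\in\Omega^K$, and $\beta_y(x_{1:K})=0$ whenever $y\notin\{x_1,\ldots,x_K\}$. Moreover, if $\{\beta^\star_y(x_{1:K})\}$ attains the maximum, then $P^\star(\mathrm{acc})$ is attained by the two-step rule: first output an intermediate token $Y$ with $\Pr(Y=y\mid X_{1:K}=x_{1:K})=\beta^\star_y(x_{1:K})$; then apply single-draft speculative sampling to $Y$ with target $q$ to produce $Z$.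
   Context: A token-level selection rule is a conditional distribution $\mathcal{P}(\cdot\mid X_{1:K})$ on $\Omega$; it is valid if its output $Z$ satisfies $\Pr(Z=z)=\sum_{x_{1:K}}\mathcal{P}(z\mid x_{1:K})p(x_{1:K})=q(z)$ for all $z\in\Omega$. Single-draft speculative sampling of a token $Y$ with distribution $p_I$ against target $q$: with probability $\min(1,q(Y)/p_I(Y))$ output $Z=Y$; otherwise output $Z$ drawn from $p^{\mathrm{res}}(x)=\frac{q(x)-\min(p_I(x),q(x))}{1-\sum_{x'}\min(p_I(x'),q(x'))}$. Its output has distribution $q$. *)

theory Defs
  imports Complex_Main
begin

text \<open>Omega is a finite type 'a; tuples x_{1:K} are lists of length K.\<close>

definition tuples :: "nat \<Rightarrow> 'a list set" where
  "tuples K = {xs. length xs = K}"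

definition is_pmf_on :: "'b set \<Rightarrow> ('b \<Rightarrow> real) \<Rightarrow> bool" where
  "is_pmf_on A f \<longleftrightarrow> (\<forall>x\<in>A. 0 \<le> f x) \<and> sum f A = 1"

text \<open>A token-level selection rule: a conditional distribution P(z | x_{1:K}) on Omega.\<close>
definition selection_rule :: "nat \<Rightarrow> ('a::finite list \<Rightarrow> 'a \<Rightarrow> real) \<Rightarrow> bool" where
  "selection_rule K P \<longleftrightarrow> (\<forall>xs\<in>tuples K. is_pmf_on UNIV (P xs))"

definition valid_rule :: "nat \<Rightarrow> ('a::finite list \<Rightarrow> real) \<Rightarrow> ('a \<Rightarrow> real)
    \<Rightarrow> ('a list \<Rightarrow> 'a \<Rightarrow> real) \<Rightarrow> bool" where
  "valid_rule K p q P \<longleftrightarrow> selection_rule K P \<and>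
     (\<forall>z. (\<Sum>xs\<in>tuples K. P xs z * p xs) = q z)"

definition acc_prob :: "nat \<Rightarrow> ('a::finite list \<Rightarrow> real) \<Rightarrow> ('a list \<Rightarrow> 'a \<Rightarrow> real) \<Rightarrow> real" where
  "acc_prob K p P = (\<Sum>xs\<in>tuples K. p xs * (\<Sum>z\<in>set xs. P xs z))"

definition P_star :: "nat \<Rightarrow> ('a::finite list \<Rightarrow> real) \<Rightarrow> ('a \<Rightarrow> real) \<Rightarrow> real" where
  "P_star K p q = Sup {acc_prob K p P | P. valid_rule K p q P}"

definition feasible_beta :: "nat \<Rightarrow> ('a::finite \<Rightarrow> 'a list \<Rightarrow> real) \<Rightarrow> bool" where
  "feasible_beta K \<beta> \<longleftrightarrow> (\<forall>xs\<in>tuples K.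
      (\<forall>y. 0 \<le> \<beta> y xs \<and> \<beta> y xs \<le> 1) \<and> (\<Sum>y\<in>UNIV. \<beta> y xs) = 1 \<and>
      (\<forall>y. y \<notin> set xs \<longrightarrow> \<beta> y xs = 0))"

definition beta_obj :: "nat \<Rightarrow> ('a::finite list \<Rightarrow> real) \<Rightarrow> ('a \<Rightarrow> real)
    \<Rightarrow> ('a \<Rightarrow> 'a list \<Rightarrow> real) \<Rightarrow> real" where
  "beta_obj K p q \<beta> = (\<Sum>y\<in>UNIV. min (q y) (\<Sum>xs\<in>tuples K. \<beta> y xs * p xs))"

text \<open>Single-draft speculative sampling of Y ~ pI against target q.
  Acceptance probability min(1, q(y)/pI(y)); convention: 1 if pI(y) = 0
  (such y never occurs as Y).\<close>
definition spec_accept :: "('a \<Rightarrow> real) \<Rightarrow> ('a \<Rightarrow> real) \<Rightarrow> 'a \<Rightarrow> real" where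
  "spec_accept pI q y = (if pI y = 0 then 1 else min 1 (q y / pI y))"

definition spec_residual :: "('a::finite \<Rightarrow> real) \<Rightarrow> ('a \<Rightarrow> real) \<Rightarrow> 'a \<Rightarrow> real" where
  "spec_residual pI q x =
     (q x - min (pI x) (q x)) / (1 - (\<Sum>x'\<in>UNIV. min (pI x') (q x')))"

definition spec_kernel :: "('a::finite \<Rightarrow> real) \<Rightarrow> ('a \<Rightarrow> real) \<Rightarrow> 'a \<Rightarrow> 'a \<Rightarrow> real" where
  "spec_kernel pI q y z =
     (if z = y then spec_accept pI q y else 0) + (1 - spec_accept pI q y) * spec_residual pI q z"

text \<open>The two-step rule: Y with Pr(Y=y | x) = beta_y(x), then speculative sampling of Y
  (whose marginal is pI(y) = sum_x beta_y(x) p(x)) against q.\<close>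
definition two_step_rule :: "nat \<Rightarrow> ('a::finite list \<Rightarrow> real) \<Rightarrow> ('a \<Rightarrow> real)
    \<Rightarrow> ('a \<Rightarrow> 'a list \<Rightarrow> real) \<Rightarrow> 'a list \<Rightarrow> 'a \<Rightarrow> real" where
  "two_step_rule K p q \<beta> xs z =
     (\<Sum>y\<in>UNIV. \<beta> y xs * spec_kernel (\<lambda>y'. \<Sum>xs'\<in>tuples K. \<beta> y' xs' * p xs') q y z)"

end

theory Submission
  imports Defs "HOL-Analysis.Analysis"
begin


lemma finite_tuples: "finite (tuples K :: 'a::finite list set)"
proof -
  have "tuples K = {xs::'a list. set xs \<subseteq> UNIV \<and> length xs = K}" by (auto simp: tuples_def)
  then show ?thesis using finite_lists_length_eq[of "UNIV::'a set" K] by simp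
qed

lemma compact_PiE_UNIV:
  fixes S :: "'i \<Rightarrow> 'b::topological_space set"
  assumes "\<And>i. compact (S i)"
  shows "compact (Pi\<^sub>E UNIV S)"
proof -
  have "compactin (product_topology (\<lambda>i. euclidean) UNIV) (Pi\<^sub>E UNIV S)"
    using assms by (simp add: compactin_PiE)
  then show ?thesis by (simp add: euclidean_product_topology)
qed

lemma coord_cont: "continuous_on A (\<lambda>\<beta>::'a \<Rightarrow> 'b \<Rightarrow> real. \<beta> y xs)"
proof -
  have "continuous_on A (\<lambda>\<beta>::'a \<Rightarrow> 'b \<Rightarrow> real. \<beta> y)"
    by (rule continuous_on_subset[OF continuous_on_product_coordinates subset_UNIV])
  then show ?thesis by (rule continuous_on_product_then_coordinatewise)
qed

lemma exists_max:
  fixes K :: nat and q :: "'a::finite \<Rightarrow> real" and p :: "'a list \<Rightarrow> real"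
  assumes "K \<ge> 1"
  shows "\<exists>\<beta>. feasible_beta K \<beta> \<and> (\<forall>\<beta>'. feasible_beta K \<beta>' \<longrightarrow> beta_obj K p q \<beta>' \<le> beta_obj K p q \<beta>)"
proof -
  define T where "T = Pi\<^sub>E UNIV (\<lambda>y::'a. Pi\<^sub>E UNIV (\<lambda>xs::'a list. if xs \<in> tuples K then {0..1::real} else {0}))"
  define C where "C = {\<beta>::'a \<Rightarrow> 'a list \<Rightarrow> real. \<forall>xs. xs \<in> tuples K \<longrightarrow> ((\<Sum>y\<in>UNIV. \<beta> y xs) = 1 \<and> (\<forall>y. y \<notin> set xs \<longrightarrow> \<beta> y xs = 0))}"
  have cT: "compact T" unfolding T_def
    by (intro compact_PiE_UNIV) auto
  have cC: "closed C"
    unfolding C_def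
  proof (intro closed_Collect_all)
    fix xs :: "'a list"
    show "closed {\<beta>::'a \<Rightarrow> 'a list \<Rightarrow> real. xs \<in> tuples K \<longrightarrow> ((\<Sum>y\<in>UNIV. \<beta> y xs) = 1 \<and> (\<forall>y. y \<notin> set xs \<longrightarrow> \<beta> y xs = 0))}"
    proof (cases "xs \<in> tuples K")
      case True
      have "closed {\<beta>::'a \<Rightarrow> 'a list \<Rightarrow> real. (\<Sum>y\<in>UNIV. \<beta> y xs) = 1}"
        by (intro closed_Collect_eq continuous_on_sum coord_cont continuous_on_const)
      moreover have "closed {\<beta>::'a \<Rightarrow> 'a list \<Rightarrow> real. \<forall>y. y \<notin> set xs \<longrightarrow> \<beta> y xs = 0}"
      proof (intro closed_Collect_all)
        fix y show "closed {\<beta>::'a \<Rightarrow> 'a list \<Rightarrow> real. y \<notin> set xs \<longrightarrow> \<beta> y xs = 0}"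
          by (cases "y \<in> set xs") (auto intro!: closed_Collect_eq coord_cont continuous_on_const)
      qed
      ultimately show ?thesis using True by (simp add: closed_Collect_conj)
    qed simp
  qed
  define F where "F = T \<inter> C"
  have cF: "compact F" unfolding F_def using cT cC by (rule compact_Int_closed)
  define \<beta>0 where "\<beta>0 = (\<lambda>(y::'a) (xs::'a list). if xs \<in> tuples K \<and> y = hd xs then 1::real else 0)"
  have ne: "xs \<in> tuples K \<Longrightarrow> xs \<noteq> []" for xs :: "'a list"
    using assms by (auto simp: tuples_def)
  have "\<beta>0 \<in> F"
    unfolding F_def T_def C_def \<beta>0_def using ne hd_in_set
    by (auto simp: PiE_iff)
  then have Fne: "F \<noteq> {}" by auto
  have cont: "continuous_on F (beta_obj K p q)"
    unfolding beta_obj_def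
    by (intro continuous_on_sum continuous_on_min continuous_on_const continuous_on_mult coord_cont)
  obtain \<beta> where b: "\<beta> \<in> F" and bmax: "\<And>\<beta>'. \<beta>' \<in> F \<Longrightarrow> beta_obj K p q \<beta>' \<le> beta_obj K p q \<beta>"
    using continuous_attains_sup[OF cF Fne cont] by blast
  have feasF: "feasible_beta K \<beta>" if "\<beta> \<in> F" for \<beta>
  proof -
    have bT: "\<beta> \<in> T" and bC: "\<beta> \<in> C" using that unfolding F_def by auto
    have "\<beta> y xs \<in> (if xs \<in> tuples K then {0..1} else {0})" for y xs
      using PiE_mem[OF PiE_mem[OF bT[unfolded T_def] UNIV_I] UNIV_I] .
    then have bnd: "xs \<in> tuples K \<Longrightarrow> 0 \<le> \<beta> y xs \<and> \<beta> y xs \<le> 1" for y xs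
      by (metis atLeastAtMost_iff)
    have cc: "xs \<in> tuples K \<Longrightarrow> (\<Sum>y\<in>UNIV. \<beta> y xs) = 1 \<and> (\<forall>y. y \<notin> set xs \<longrightarrow> \<beta> y xs = 0)" for xs
      using bC unfolding C_def by blast
    show ?thesis unfolding feasible_beta_def using bnd cc by blast
  qed
  show ?thesis
  proof (intro exI conjI allI impI)
    show "feasible_beta K \<beta>" using feasF b .
    fix \<beta>' :: "'a \<Rightarrow> 'a list \<Rightarrow> real" assume f': "feasible_beta K \<beta>'"
    define \<beta>'' where "\<beta>'' = (\<lambda>(y::'a) (xs::'a list). if xs \<in> tuples K then \<beta>' y xs else 0)"
    have "\<beta>'' \<in> F"
      using f' unfolding F_def T_def C_def feasible_beta_def \<beta>''_def
      by (auto simp: PiE_iff)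
    moreover have "beta_obj K p q \<beta>'' = beta_obj K p q \<beta>'"
      unfolding beta_obj_def \<beta>''_def by (intro sum.cong refl arg_cong2[where f=min]) auto
    ultimately show "beta_obj K p q \<beta>' \<le> beta_obj K p q \<beta>" using bmax by metis
  qed
qed



lemma sum_if_mem: "finite B \<Longrightarrow> A \<subseteq> B \<Longrightarrow> (\<Sum>y\<in>B. if y \<in> A then f y else 0) = sum f A"
  by (simp add: sum.If_cases Int_absorb1)

lemma valid_to_beta:
  fixes K :: nat and q :: "'a::finite \<Rightarrow> real" and p :: "'a list \<Rightarrow> real"
  assumes K: "K \<ge> 1" and pp: "is_pmf_on (tuples K) p" and v: "valid_rule K p q P"
  shows "\<exists>\<beta>. feasible_beta K \<beta> \<and> acc_prob K p P \<le> beta_obj K p q \<beta>"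
proof -
  have ne: "xs \<in> tuples K \<Longrightarrow> xs \<noteq> []" for xs :: "'a list"
    using K by (auto simp: tuples_def)
  have Pn: "xs \<in> tuples K \<Longrightarrow> 0 \<le> P xs y" for xs y
    using v unfolding valid_rule_def selection_rule_def is_pmf_on_def by blast
  have P1: "xs \<in> tuples K \<Longrightarrow> (\<Sum>y\<in>UNIV. P xs y) = 1" for xs
    using v unfolding valid_rule_def selection_rule_def is_pmf_on_def by blast
  have Pq: "(\<Sum>xs\<in>tuples K. P xs z * p xs) = q z" for z
    using v unfolding valid_rule_def by blast
  have pn: "xs \<in> tuples K \<Longrightarrow> 0 \<le> p xs" for xs
    using pp unfolding is_pmf_on_def by blast
  define s where "s xs = (\<Sum>z\<in>set xs. P xs z)" for xs
  have s1: "xs \<in> tuples K \<Longrightarrow> s xs \<le> 1" for xs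
    unfolding s_def using P1[of xs] Pn[of xs] by (metis sum_mono2 finite subset_UNIV)
  have sP: "xs \<in> tuples K \<Longrightarrow> y \<in> set xs \<Longrightarrow> P xs y \<le> s xs" for xs y
    unfolding s_def using Pn[of xs] by (intro member_le_sum) auto
  define \<beta> where "\<beta> y xs = (if y \<in> set xs then P xs y else 0) + (if y = hd xs then 1 - s xs else 0)"
    for y xs
  have feas: "feasible_beta K \<beta>"
    unfolding feasible_beta_def
  proof (intro ballI conjI allI impI)
    fix xs :: "'a list" and y :: 'a assume xs: "xs \<in> tuples K"
    have h: "hd xs \<in> set xs" using ne[OF xs] by simp
    show "0 \<le> \<beta> y xs" unfolding \<beta>_def using Pn[OF xs] s1[OF xs] by auto
    show "\<beta> y xs \<le> 1" unfolding \<beta>_def using Pn[OF xs] s1[OF xs] sP[OF xs] h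
      by (cases "y = hd xs") (auto simp: P1 intro: order_trans[OF _ s1[OF xs]])
    show "y \<notin> set xs \<Longrightarrow> \<beta> y xs = 0" unfolding \<beta>_def using h by auto
  next
    fix xs :: "'a list" assume xs: "xs \<in> tuples K"
    have h: "hd xs \<in> set xs" using ne[OF xs] by simp
    have "(\<Sum>y\<in>UNIV. \<beta> y xs) = (\<Sum>y\<in>UNIV. if y \<in> set xs then P xs y else 0) + (\<Sum>y\<in>UNIV. if y = hd xs then 1 - s xs else 0)"
      unfolding \<beta>_def by (rule sum.distrib)
    also have "\<dots> = s xs + (1 - s xs)"
      by (subst sum_if_mem) (auto simp: s_def)
    finally show "(\<Sum>y\<in>UNIV. \<beta> y xs) = 1" by simp
  qed
  define a where "a y = (\<Sum>xs\<in>tuples K. (if y \<in> set xs then P xs y else 0) * p xs)" for y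
  have aq: "a y \<le> q y" for y
    unfolding a_def Pq[symmetric] using Pn pn by (intro sum_mono) (auto)
  have ab: "a y \<le> (\<Sum>xs\<in>tuples K. \<beta> y xs * p xs)" for y
    unfolding a_def \<beta>_def using Pn pn s1
    by (intro sum_mono mult_right_mono) auto
  have "acc_prob K p P = (\<Sum>xs\<in>tuples K. p xs * (\<Sum>y\<in>UNIV. if y \<in> set xs then P xs y else 0))"
    unfolding acc_prob_def by (simp add: sum_if_mem)
  also have "\<dots> = (\<Sum>y\<in>UNIV. a y)"
    unfolding a_def sum_distrib_left by (subst sum.swap) (simp add: mult.commute)
  also have "\<dots> \<le> beta_obj K p q \<beta>"
    unfolding beta_obj_def using aq ab by (intro sum_mono) simp
  finally show ?thesis using feas by blast
qed



lemma two_step_props: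
  fixes K :: nat and q :: "'a::finite \<Rightarrow> real" and p :: "'a list \<Rightarrow> real"
  assumes qq: "is_pmf_on UNIV q" and pp: "is_pmf_on (tuples K) p" and fb: "feasible_beta K \<beta>"
  shows "valid_rule K p q (two_step_rule K p q \<beta>) \<and> beta_obj K p q \<beta> \<le> acc_prob K p (two_step_rule K p q \<beta>)"
proof -
  have fin: "finite (tuples K :: 'a list set)"
  proof -
    have "tuples K = {xs::'a list. set xs \<subseteq> UNIV \<and> length xs = K}" by (auto simp: tuples_def)
    then show ?thesis using finite_lists_length_eq[of "UNIV::'a set" K] by simp
  qed
  have qn: "0 \<le> q y" for y using qq unfolding is_pmf_on_def by blast
  have q1: "(\<Sum>y\<in>UNIV. q y) = 1" using qq unfolding is_pmf_on_def by blast
  have pn: "xs \<in> tuples K \<Longrightarrow> 0 \<le> p xs" for xs using pp unfolding is_pmf_on_def by blast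
  have p1: "(\<Sum>xs\<in>tuples K. p xs) = 1" using pp unfolding is_pmf_on_def by blast
  have bn: "xs \<in> tuples K \<Longrightarrow> 0 \<le> \<beta> y xs" for xs y using fb unfolding feasible_beta_def by blast
  have b1: "xs \<in> tuples K \<Longrightarrow> (\<Sum>y\<in>UNIV. \<beta> y xs) = 1" for xs using fb unfolding feasible_beta_def by blast
  have b0: "xs \<in> tuples K \<Longrightarrow> y \<notin> set xs \<Longrightarrow> \<beta> y xs = 0" for xs y using fb unfolding feasible_beta_def by blast
  define pI where "pI = (\<lambda>y'. \<Sum>xs'\<in>tuples K. \<beta> y' xs' * p xs')"
  define a where "a = spec_accept pI q"
  define r where "r = spec_residual pI q"
  define k where "k = spec_kernel pI q"
  define S where "S = (\<Sum>x'\<in>UNIV. min (pI x') (q x'))"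
  have TS: "two_step_rule K p q \<beta> xs z = (\<Sum>y\<in>UNIV. \<beta> y xs * k y z)" for xs z
    unfolding two_step_rule_def k_def pI_def ..
  have kdef: "k y z = (if z = y then a y else 0) + (1 - a y) * r z" for y z
    unfolding k_def a_def r_def spec_kernel_def ..
  have pIn: "0 \<le> pI y" for y unfolding pI_def using bn pn by (intro sum_nonneg mult_nonneg_nonneg) auto
  have pI1: "(\<Sum>y\<in>UNIV. pI y) = 1"
  proof -
    have "(\<Sum>y\<in>UNIV. pI y) = (\<Sum>xs\<in>tuples K. (\<Sum>y\<in>UNIV. \<beta> y xs) * p xs)"
      unfolding pI_def sum_distrib_right by (rule sum.swap)
    also have "\<dots> = (\<Sum>xs\<in>tuples K. p xs)" using b1 by (intro sum.cong) auto
    finally show ?thesis using p1 by simp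
  qed
  have a0: "0 \<le> a y" for y unfolding a_def spec_accept_def using qn[of y] pIn[of y] by auto
  have a1: "a y \<le> 1" for y unfolding a_def spec_accept_def by auto
  have pa: "pI y * a y = min (pI y) (q y)" for y
  proof (cases "pI y = 0")
    case True then show ?thesis unfolding a_def spec_accept_def using qn[of y] by simp
  next
    case False
    then have pos: "pI y > 0" using pIn[of y] by simp
    show ?thesis
    proof (cases "q y \<le> pI y")
      case True
      then have "q y / pI y \<le> 1" using pos by simp
      then show ?thesis unfolding a_def spec_accept_def using False True pos by (simp add: min_def)
    next
      case F2: False
      then have "\<not> q y / pI y \<le> 1" using pos by simp
      then show ?thesis unfolding a_def spec_accept_def using False F2 by (simp add: min_def)
    qed
  qed
  have S1: "S \<le> 1" unfolding S_def q1[symmetric] by (intro sum_mono) simp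
  have qmS: "(\<Sum>z\<in>UNIV. q z - min (pI z) (q z)) = 1 - S"
    unfolding S_def by (simp add: sum_subtractf q1)
  have pmS: "(\<Sum>z\<in>UNIV. pI z - min (pI z) (q z)) = 1 - S"
    unfolding S_def by (simp add: sum_subtractf pI1)
  have rS: "r z * (1 - S) = q z - min (pI z) (q z)" for z
  proof (cases "S = 1")
    case True
    have "\<forall>z\<in>UNIV. q z - min (pI z) (q z) = 0"
      using qmS True by (subst sum_nonneg_eq_0_iff[symmetric]) auto
    then show ?thesis using True by simp
  next
    case False
    then show ?thesis unfolding r_def spec_residual_def S_def[symmetric] by simp
  qed
  have rn: "0 \<le> r z" for z unfolding r_def spec_residual_def S_def[symmetric] using S1
    by (intro divide_nonneg_nonneg) auto
  have r1: "S < 1 \<Longrightarrow> (\<Sum>z\<in>UNIV. r z) = 1"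
    unfolding r_def spec_residual_def S_def[symmetric] by (simp add: sum_divide_distrib[symmetric] qmS)
  have aS: "S = 1 \<Longrightarrow> a y = 1" for y
  proof -
    assume S: "S = 1"
    have "\<forall>z\<in>UNIV. pI z - min (pI z) (q z) = 0"
      using pmS S by (subst sum_nonneg_eq_0_iff[symmetric]) auto
    then have le: "pI y \<le> q y" by (metis UNIV_I eq_iff_diff_eq_0 min.absorb_iff1)
    show "a y = 1"
    proof (cases "pI y = 0")
      case True then show ?thesis unfolding a_def spec_accept_def by simp
    next
      case False
      then have "pI y > 0" using pIn[of y] by simp
      then have "q y / pI y \<ge> 1" using le by simp
      then show ?thesis unfolding a_def spec_accept_def using False by simp
    qed
  qed
  have kn: "0 \<le> k y z" for y z unfolding kdef using a0 a1 rn by (auto intro!: add_nonneg_nonneg mult_nonneg_nonneg)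
  have k1: "(\<Sum>z\<in>UNIV. k y z) = 1" for y
  proof -
    have "(\<Sum>z\<in>UNIV. k y z) = a y + (1 - a y) * (\<Sum>z\<in>UNIV. r z)"
      unfolding kdef by (simp add: sum.distrib sum_distrib_left)
    then show ?thesis using S1 r1 aS by (cases "S = 1") auto
  qed
  have kdiag: "a y \<le> k y y" for y unfolding kdef using a1 rn by simp
  have sel: "selection_rule K (two_step_rule K p q \<beta>)"
    unfolding selection_rule_def is_pmf_on_def
  proof (intro ballI conjI)
    fix xs :: "'a list" and z assume xs: "xs \<in> tuples K"
    show "0 \<le> two_step_rule K p q \<beta> xs z" unfolding TS using bn[OF xs] kn
      by (intro sum_nonneg mult_nonneg_nonneg) auto
  next
    fix xs :: "'a list" assume xs: "xs \<in> tuples K"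
    have "(\<Sum>z\<in>UNIV. two_step_rule K p q \<beta> xs z) = (\<Sum>y\<in>UNIV. \<beta> y xs * (\<Sum>z\<in>UNIV. k y z))"
      unfolding TS sum_distrib_left by (rule sum.swap)
    also have "\<dots> = 1" using k1 b1[OF xs] by simp
    finally show "(\<Sum>z\<in>UNIV. two_step_rule K p q \<beta> xs z) = 1" .
  qed
  have marg: "(\<Sum>xs\<in>tuples K. two_step_rule K p q \<beta> xs z * p xs) = q z" for z
  proof -
    have "(\<Sum>xs\<in>tuples K. two_step_rule K p q \<beta> xs z * p xs) = (\<Sum>y\<in>UNIV. pI y * k y z)"
      unfolding TS pI_def sum_distrib_right by (subst sum.swap) (simp add: mult_ac)
    also have "\<dots> = (\<Sum>y\<in>UNIV. (if z = y then pI y * a y else 0) + r z * (pI y - pI y * a y))"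
      unfolding kdef by (intro sum.cong) (auto simp: algebra_simps)
    also have "\<dots> = pI z * a z + r z * (\<Sum>y\<in>UNIV. pI y - pI y * a y)"
      by (simp add: sum.distrib sum_distrib_left)
    also have "\<dots> = min (pI z) (q z) + r z * (1 - S)"
      using pa pmS by simp
    also have "\<dots> = q z" using rS by simp
    finally show ?thesis .
  qed
  have valid: "valid_rule K p q (two_step_rule K p q \<beta>)"
    unfolding valid_rule_def using sel marg by blast
  have inner: "(\<Sum>z\<in>set xs. \<beta> z xs * a z) \<le> (\<Sum>z\<in>set xs. two_step_rule K p q \<beta> xs z)"
    if xs: "xs \<in> tuples K" for xs
  proof (intro sum_mono)
    fix z assume z: "z \<in> set xs"
    have "\<beta> z xs * a z \<le> \<beta> z xs * k z z" using kdiag bn[OF xs] by (intro mult_left_mono) auto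
    also have "\<dots> \<le> (\<Sum>y\<in>UNIV. \<beta> y xs * k y z)"
      using member_le_sum[of z UNIV "\<lambda>y. \<beta> y xs * k y z"] bn[OF xs] kn by simp
    finally show "\<beta> z xs * a z \<le> two_step_rule K p q \<beta> xs z" unfolding TS .
  qed
  have setU: "(\<Sum>z\<in>set xs. \<beta> z xs * a z) = (\<Sum>z\<in>UNIV. \<beta> z xs * a z)" if xs: "xs \<in> tuples K" for xs
    by (rule sum.mono_neutral_left) (auto simp: b0[OF xs])
  have "beta_obj K p q \<beta> = (\<Sum>z\<in>UNIV. pI z * a z)"
    unfolding beta_obj_def pa by (simp add: min.commute pI_def)
  also have "\<dots> = (\<Sum>xs\<in>tuples K. p xs * (\<Sum>z\<in>UNIV. \<beta> z xs * a z))"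
    unfolding pI_def sum_distrib_left sum_distrib_right by (subst sum.swap) (simp add: mult_ac)
  also have "\<dots> = (\<Sum>xs\<in>tuples K. p xs * (\<Sum>z\<in>set xs. \<beta> z xs * a z))"
    using setU by simp
  also have "\<dots> \<le> acc_prob K p (two_step_rule K p q \<beta>)"
    unfolding acc_prob_def by (rule sum_mono, rule mult_left_mono) (auto intro: inner pn)
  finally show ?thesis using valid by blast
qed


theorem theorem4:
  fixes K :: nat and q :: "'a::finite \<Rightarrow> real" and p :: "'a list \<Rightarrow> real"
  assumes "K \<ge> 1"
    and "is_pmf_on UNIV q"
    and "is_pmf_on (tuples K) p"
  shows "(\<exists>\<beta>. feasible_beta K \<beta> \<and>
            (\<forall>\<beta>'. feasible_beta K \<beta>' \<longrightarrow> beta_obj K p q \<beta>' \<le> beta_obj K p q \<beta>) \<and>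
            P_star K p q = beta_obj K p q \<beta>)
       \<and> (\<forall>\<beta>. feasible_beta K \<beta> \<and>
            (\<forall>\<beta>'. feasible_beta K \<beta>' \<longrightarrow> beta_obj K p q \<beta>' \<le> beta_obj K p q \<beta>) \<longrightarrow>
            valid_rule K p q (two_step_rule K p q \<beta>) \<and>
            acc_prob K p (two_step_rule K p q \<beta>) = P_star K p q)"
proof -
  obtain bs where fs: "feasible_beta K bs"
    and mx: "\<And>\<beta>'. feasible_beta K \<beta>' \<Longrightarrow> beta_obj K p q \<beta>' \<le> beta_obj K p q bs"
    using exists_max[OF assms(1), of p q] by blast
  define V where "V = {acc_prob K p P | P. valid_rule K p q P}"
  have ub: "v \<le> beta_obj K p q bs" if vV: "v \<in> V" for v
  proof -
    obtain P where v: "v = acc_prob K p P" and P: "valid_rule K p q P" using vV unfolding V_def by blast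
    obtain \<beta> where "feasible_beta K \<beta>" and "acc_prob K p P \<le> beta_obj K p q \<beta>"
      using valid_to_beta[OF assms(1) assms(3) P] by blast
    then show ?thesis using v mx by (meson order_trans)
  qed
  have ts: "valid_rule K p q (two_step_rule K p q bs)"
    "beta_obj K p q bs \<le> acc_prob K p (two_step_rule K p q bs)"
    using two_step_props[OF assms(2) assms(3) fs] by auto
  have inV: "acc_prob K p (two_step_rule K p q bs) \<in> V" unfolding V_def using ts(1) by blast
  have bdd: "bdd_above V" using ub by (intro bdd_aboveI) blast
  have PS: "P_star K p q = beta_obj K p q bs"
  proof (rule antisym)
    show "P_star K p q \<le> beta_obj K p q bs"
      unfolding P_star_def V_def[symmetric] using inV ub by (intro cSup_least) auto
    have "acc_prob K p (two_step_rule K p q bs) \<le> Sup V" using cSup_upper[OF inV bdd] .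
    then show "beta_obj K p q bs \<le> P_star K p q"
      unfolding P_star_def V_def[symmetric] using ts(2) by linarith
  qed
  show ?thesis
  proof (intro conjI allI impI)
    show "\<exists>\<beta>. feasible_beta K \<beta> \<and>
            (\<forall>\<beta>'. feasible_beta K \<beta>' \<longrightarrow> beta_obj K p q \<beta>' \<le> beta_obj K p q \<beta>) \<and>
            P_star K p q = beta_obj K p q \<beta>"
      using fs mx PS by blast
  next
    fix \<beta> assume h: "feasible_beta K \<beta> \<and>
            (\<forall>\<beta>'. feasible_beta K \<beta>' \<longrightarrow> beta_obj K p q \<beta>' \<le> beta_obj K p q \<beta>)"
    have eq: "beta_obj K p q \<beta> = beta_obj K p q bs"
      using h mx fs by (meson antisym)
    have t2: "valid_rule K p q (two_step_rule K p q \<beta>)"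
      "beta_obj K p q \<beta> \<le> acc_prob K p (two_step_rule K p q \<beta>)"
      using two_step_props[OF assms(2) assms(3)] h by auto
    show "valid_rule K p q (two_step_rule K p q \<beta>)" using t2(1) .
    have inV2: "acc_prob K p (two_step_rule K p q \<beta>) \<in> V" unfolding V_def using t2(1) by blast
    have "acc_prob K p (two_step_rule K p q \<beta>) \<le> P_star K p q"
      unfolding P_star_def V_def[symmetric] using cSup_upper[OF inV2 bdd] .
    then show "acc_prob K p (two_step_rule K p q \<beta>) = P_star K p q"
      using t2(2) eq PS by linarith
  qed
qed

end
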